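(* Let $n\geqslant 3$ and let $\lambda=(\lambda_1,\ldots,\lambda_s)$ be a partition of $n$ with $s\geqslant 2$ and $\lambda_1>\lambda_2$. Put $m=\lambda_2+\cdots+\lambda_s$. Let $t$ be a standard tableau of shape $\lambda$ with $n$ placed in the rightmost cell of its first row. Then the polytabloid $\mathbf{e}_t$ is an eigenvector of $J_n$ (acting on $M^\lambda$) with eigenvalue $n-m-1$, i.e. $J_n(\mathbf{e}_t)=(n-m-1)\mathbf{e}_t$.
   Context: For $\pi\in\mathrm{Sym}_n$ and a tableau $t$ of shape $\lambda$ (filling of the Young diagram with $1,\ldots,n$), $\pi(t)$ replaces each entry $x$ by $\pi(x)$. The $\lambda$-tabloid $\{t\}$ is the set of tableaux obtained from $t$ by permuting entries within rows; $M^\lambda$ is the complex vector space with basis the $\lambda$-tabloids, with $\mathrm{Sym}_n$ acting by $\pi\{t\}=\{\pi(t)\}$. $C_t$ is the column-stabilizer of $t$ and $\mathbf{e}_t=\sum_{\sigma\in C_t}\mathrm{sgn}(\sigma)\{\sigma(t)\}$. The Jucys–Murphy element $J_n=(1\ n)+(2\ n)+\cdots+(n-1\ n)$ acts on $M^\lambda$ via this action. A tableau is standard if its entries increase along rows and down columns. *)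

theory Defs
  imports Complex_Main "HOL-Combinatorics.Combinatorics"
begin

type_synonym tableau = "nat \<times> nat \<Rightarrow> nat"
type_synonym tabloid = "tableau set"

definition is_partition :: "nat list \<Rightarrow> nat \<Rightarrow> bool" where
  "is_partition lam n \<longleftrightarrow> sorted_wrt (\<ge>) lam \<and> (\<forall>x\<in>set lam. 0 < x) \<and> sum_list lam = n"

definition cells :: "nat list \<Rightarrow> (nat \<times> nat) set" where
  "cells lam = {(i, j). i < length lam \<and> j < lam ! i}"

definition is_tableau :: "nat list \<Rightarrow> nat \<Rightarrow> tableau \<Rightarrow> bool" where
  "is_tableau lam n t \<longleftrightarrow> bij_betw t (cells lam) {1..n} \<and> (\<forall>c. c \<notin> cells lam \<longrightarrow> t c = 0)"

definition is_standard :: "nat list \<Rightarrow> tableau \<Rightarrow> bool" where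
  "is_standard lam t \<longleftrightarrow>
     (\<forall>i j. (i, j) \<in> cells lam \<longrightarrow> (i, Suc j) \<in> cells lam \<longrightarrow> t (i, j) < t (i, Suc j)) \<and>
     (\<forall>i j. (i, j) \<in> cells lam \<longrightarrow> (Suc i, j) \<in> cells lam \<longrightarrow> t (i, j) < t (Suc i, j))"

definition tabloid_of :: "nat list \<Rightarrow> tableau \<Rightarrow> tabloid" where
  "tabloid_of lam t = {t \<circ> \<sigma> | \<sigma>. \<sigma> permutes cells lam \<and> (\<forall>c. fst (\<sigma> c) = fst c)}"

definition tabloid_act :: "(nat \<Rightarrow> nat) \<Rightarrow> tabloid \<Rightarrow> tabloid" where
  "tabloid_act \<pi> T = (\<lambda>s. \<pi> \<circ> s) ` T"

text \<open>Elements of M^lam are represented as coefficient functions on tabloids.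
  The permutation action is the linear extension of the action on tabloids.\<close>
definition M_act :: "(nat \<Rightarrow> nat) \<Rightarrow> (tabloid \<Rightarrow> complex) \<Rightarrow> (tabloid \<Rightarrow> complex)" where
  "M_act \<pi> v = (\<lambda>T. v (tabloid_act (inv \<pi>) T))"

definition col_stab :: "nat list \<Rightarrow> nat \<Rightarrow> tableau \<Rightarrow> (nat \<Rightarrow> nat) set" where
  "col_stab lam n t = {\<sigma>. \<sigma> permutes {1..n} \<and>
     (\<forall>c\<in>cells lam. \<sigma> (t c) \<in> t ` {c' \<in> cells lam. snd c' = snd c})}"

definition polytabloid :: "nat list \<Rightarrow> nat \<Rightarrow> tableau \<Rightarrow> (tabloid \<Rightarrow> complex)" where
  "polytabloid lam n t = (\<lambda>T. \<Sum>\<sigma>\<in>col_stab lam n t.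
      if tabloid_of lam (\<sigma> \<circ> t) = T then of_int (sign \<sigma>) else 0)"

definition JM_act :: "nat \<Rightarrow> (tabloid \<Rightarrow> complex) \<Rightarrow> (tabloid \<Rightarrow> complex)" where
  "JM_act n v = (\<lambda>T. \<Sum>k\<in>{1..<n}. M_act (Transposition.transpose k n) v T)"

end

theory Submission imports Defs begin

lemma tab_comp: "tabloid_of lam (\<pi> \<circ> s) = tabloid_act \<pi> (tabloid_of lam s)"
  unfolding tabloid_of_def tabloid_act_def by (auto simp: comp_assoc)

lemma tabact_invol: "tabloid_act (Transposition.transpose a b) (tabloid_act (Transposition.transpose a b) X) = X"
  unfolding tabloid_act_def by (simp add: image_image comp_assoc[symmetric])

lemma tab_swap_row:
  assumes "c1 \<in> cells lam" "c2 \<in> cells lam" "fst c1 = fst c2"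
  shows "tabloid_of lam (s \<circ> Transposition.transpose c1 c2) = tabloid_of lam s"
proof -
  let ?r = "Transposition.transpose c1 c2"
  have rp: "?r permutes cells lam" using assms by (simp add: permutes_swap_id)
  have rf: "fst (?r c) = fst c" for c using assms(3) by (simp add: transpose_def)
  show ?thesis
  proof
    show "tabloid_of lam (s \<circ> ?r) \<subseteq> tabloid_of lam s"
      unfolding tabloid_of_def
    proof clarify
      fix \<sigma> assume "\<sigma> permutes cells lam" "\<forall>c. fst (\<sigma> c) = fst c"
      then show "\<exists>\<sigma>'. s \<circ> ?r \<circ> \<sigma> = s \<circ> \<sigma>' \<and> \<sigma>' permutes cells lam \<and> (\<forall>c. fst (\<sigma>' c) = fst c)"
        by (intro exI[of _ "?r \<circ> \<sigma>"]) (auto simp: comp_assoc rf permutes_compose rp)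
    qed
    show "tabloid_of lam s \<subseteq> tabloid_of lam (s \<circ> ?r)"
      unfolding tabloid_of_def
    proof clarify
      fix \<sigma> assume "\<sigma> permutes cells lam" "\<forall>c. fst (\<sigma> c) = fst c"
      then show "\<exists>\<sigma>'. s \<circ> \<sigma> = s \<circ> ?r \<circ> \<sigma>' \<and> \<sigma>' permutes cells lam \<and> (\<forall>c. fst (\<sigma>' c) = fst c)"
        by (intro exI[of _ "?r \<circ> \<sigma>"]) (auto simp: comp_assoc[symmetric] rf permutes_compose rp)
    qed
  qed
qed

lemma M_act_poly:
  "M_act (Transposition.transpose k m) (polytabloid lam n t) T =
   (\<Sum>\<sigma>\<in>col_stab lam n t. if tabloid_of lam (Transposition.transpose k m \<circ> (\<sigma> \<circ> t)) = T then of_int (sign \<sigma>) else 0)"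
proof -
  have "(tabloid_of lam (\<sigma> \<circ> t) = tabloid_act (inv (Transposition.transpose k m)) T) =
        (tabloid_of lam (Transposition.transpose k m \<circ> (\<sigma> \<circ> t)) = T)" for \<sigma>
    by (simp only: inv_transpose_eq tab_comp) (metis tabact_invol)
  then show ?thesis unfolding M_act_def polytabloid_def by simp
qed

lemma col_stab_comp:
  assumes "\<sigma> \<in> col_stab lam n t" "\<rho> \<in> col_stab lam n t"
  shows "\<sigma> \<circ> \<rho> \<in> col_stab lam n t"
proof -
  have "(\<sigma> \<circ> \<rho>) (t c) \<in> t ` {c' \<in> cells lam. snd c' = snd c}" if "c \<in> cells lam" for c
  proof -
    from assms(2) that obtain c' where c': "c' \<in> cells lam" "snd c' = snd c" "\<rho> (t c) = t c'"
      unfolding col_stab_def by blast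
    from assms(1) c'(1) have "\<sigma> (t c') \<in> t ` {c'' \<in> cells lam. snd c'' = snd c'}"
      unfolding col_stab_def by blast
    with c' show ?thesis by auto
  qed
  with assms show ?thesis unfolding col_stab_def by (auto intro: permutes_compose)
qed

lemma sum_zero_invol:
  fixes C :: "(nat \<Rightarrow> nat) set"
  assumes fin: "finite C" and perm: "\<And>\<sigma>. \<sigma> \<in> C \<Longrightarrow> permutation \<sigma>"
    and tC: "\<tau> \<in> C" and cl: "\<And>\<sigma>. \<sigma> \<in> C \<Longrightarrow> \<sigma> \<circ> \<tau> \<in> C"
    and inv: "\<tau> \<circ> \<tau> = id" and sg: "sign \<tau> = -1"
    and tb: "tabloid_of lam (\<tau> \<circ> s) = tabloid_of lam s"
  shows "(\<Sum>\<sigma>\<in>C. if tabloid_of lam (\<sigma> \<circ> s) = T then (of_int (sign \<sigma>) :: complex) else 0) = 0"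
proof -
  let ?F = "\<lambda>\<sigma>. if tabloid_of lam (\<sigma> \<circ> s) = T then (of_int (sign \<sigma>) :: complex) else 0"
  have bij: "bij_betw (\<lambda>\<sigma>. \<sigma> \<circ> \<tau>) C C"
    by (rule bij_betw_byWitness[where f'="\<lambda>\<sigma>. \<sigma> \<circ> \<tau>"]) (auto simp: comp_assoc inv cl)
  have "sum ?F C = (\<Sum>\<sigma>\<in>C. ?F (\<sigma> \<circ> \<tau>))" by (rule sum.reindex_bij_betw[symmetric, OF bij])
  also have "\<dots> = (\<Sum>\<sigma>\<in>C. - ?F \<sigma>)"
  proof (rule sum.cong)
    fix \<sigma> assume "\<sigma> \<in> C"
    then have "sign (\<sigma> \<circ> \<tau>) = - sign \<sigma>" using perm tC sg by (simp add: sign_compose)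
    moreover have "tabloid_of lam (\<sigma> \<circ> \<tau> \<circ> s) = tabloid_of lam (\<sigma> \<circ> s)"
      by (simp add: comp_assoc tab_comp[of lam \<sigma> "\<tau> \<circ> s"] tb tab_comp[of lam \<sigma> s])
    ultimately show "?F (\<sigma> \<circ> \<tau>) = - ?F \<sigma>" by simp
  qed simp
  also have "\<dots> = - sum ?F C" by (simp add: sum_negf)
  finally show ?thesis by simp
qed

theorem proposition3:
  fixes n :: nat and lam :: "nat list" and t :: tableau
  assumes "n \<ge> 3"
    and "is_partition lam n"
    and "length lam \<ge> 2"
    and "lam ! 0 > lam ! 1"
    and "is_tableau lam n t"
    and "is_standard lam t"
    and "t (0, lam ! 0 - 1) = n"
  shows "JM_act n (polytabloid lam n t)
         = (\<lambda>T. (of_nat n - of_nat (sum_list (tl lam)) - 1) * polytabloid lam n t T)"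
proof
  fix T
  define L0 where "L0 = lam ! 0"
  define e where "e = (0::nat, L0 - 1)"
  define C where "C = col_stab lam n t"
  define P where "P = polytabloid lam n t"
  note tr = Transposition.transpose_def
  have part: "sorted_wrt (\<ge>) lam" "\<forall>x\<in>set lam. 0 < x" "sum_list lam = n"
    using assms(2) unfolding is_partition_def by auto
  have bijt: "bij_betw t (cells lam) {1..n}" and off: "\<And>c. c \<notin> cells lam \<Longrightarrow> t c = 0"
    using assms(5) unfolding is_tableau_def by auto
  have injt: "inj_on t (cells lam)" using bijt by (rule bij_betw_imp_inj_on)
  have imt: "t ` cells lam = {1..n}" using bijt by (rule bij_betw_imp_surj_on)
  have tin: "\<And>c. c \<in> cells lam \<Longrightarrow> t c \<in> {1..n}" using imt by blast
  have te: "t e = n" using assms(7) by (simp add: e_def L0_def)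
  have L0pos: "L0 \<ge> 1" using assms(4) L0_def by simp
  have le1: "lam ! i \<le> lam ! 1" if "1 \<le> i" "i < length lam" for i
    using part(1) that by (cases "i = 1") (auto simp: sorted_wrt_iff_nth_less)
  have le0: "lam ! i \<le> L0" if "i < length lam" for i
    using part(1) that unfolding L0_def by (cases "i = 0") (auto simp: sorted_wrt_iff_nth_less)
  have ecell: "e \<in> cells lam" using L0pos assms(3) by (auto simp: e_def cells_def L0_def)
  have col_e: "c \<in> cells lam \<Longrightarrow> snd c = L0 - 1 \<Longrightarrow> c = e" for c
  proof -
    assume c: "c \<in> cells lam" "snd c = L0 - 1"
    obtain i j where ij: "c = (i, j)" by (cases c)
    show "c = e"
    proof (cases "i = 0")
      case True then show ?thesis using c ij e_def by simp
    next
      case False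
      then have "lam ! i \<le> lam ! 1" using le1 c ij by (simp add: cells_def)
      then show ?thesis using c ij assms(4) L0_def by (simp add: cells_def, linarith)
    qed
  qed
  have fixn: "\<sigma> n = n" if "\<sigma> \<in> C" for \<sigma>
  proof -
    from that ecell have "\<sigma> (t e) \<in> t ` {c' \<in> cells lam. snd c' = snd e}"
      unfolding C_def col_stab_def by blast
    then obtain c' where "c' \<in> cells lam" "snd c' = L0 - 1" "\<sigma> (t e) = t c'"
      by (auto simp: e_def)
    with col_e te show ?thesis by auto
  qed
  have Cperm: "\<sigma> permutes {1..n}" if "\<sigma> \<in> C" for \<sigma> using that by (simp add: C_def col_stab_def)
  have Cpn: "permutation \<sigma>" if "\<sigma> \<in> C" for \<sigma>
    using Cperm[OF that] permutation_permutes by blast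
  have finC: "finite C"
  proof (rule finite_subset)
    show "C \<subseteq> {\<sigma>. \<sigma> permutes {1..n}}" using Cperm by blast
  qed (rule finite_permutations, simp)
  have fincells: "finite (cells lam)" using bijt bij_betw_finite by blast
  have "JM_act n P T = (\<Sum>k\<in>{1..<n}. \<Sum>\<sigma>\<in>C.
      if tabloid_of lam (Transposition.transpose k n \<circ> (\<sigma> \<circ> t)) = T then of_int (sign \<sigma>) else 0)"
    unfolding JM_act_def P_def C_def by (simp add: M_act_poly)
  also have "\<dots> = (\<Sum>\<sigma>\<in>C. \<Sum>k\<in>{1..<n}.
      if tabloid_of lam (Transposition.transpose k n \<circ> (\<sigma> \<circ> t)) = T then of_int (sign \<sigma>) else 0)"
    by (rule sum.swap)
  also have "\<dots> = (\<Sum>\<sigma>\<in>C. \<Sum>j\<in>{1..<n}.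
      if tabloid_of lam (\<sigma> \<circ> (Transposition.transpose j n \<circ> t)) = T then of_int (sign \<sigma>) else 0)"
  proof (rule sum.cong[OF refl])
    fix \<sigma> assume sC: "\<sigma> \<in> C"
    have bs: "bij \<sigma>" using Cperm[OF sC] permutes_bij by blast
    have injs: "inj_on \<sigma> {1..n}" using bs by (meson bij_is_inj inj_on_subset subset_UNIV)
    have "{1..<n} = {1..n} - {n}" by auto
    then have "\<sigma> ` {1..<n} = \<sigma> ` ({1..n} - {n})" by simp
    also have "\<dots> = {1..<n}" using injs fixn[OF sC] Cperm[OF sC] assms(1)
      by (auto simp: inj_on_image_set_diff permutes_image)
    finally have bb: "bij_betw \<sigma> {1..<n} {1..<n}"
      using injs by (auto simp: bij_betw_def intro: inj_on_subset)
    have ce: "Transposition.transpose (\<sigma> j) n \<circ> \<sigma> = \<sigma> \<circ> Transposition.transpose j n" for j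
    proof -
      have i1: "inv \<sigma> (\<sigma> j) = j" "inv \<sigma> (\<sigma> n) = n" using bs by (simp_all add: bij_is_inj inv_f_f)
      show ?thesis using transpose_comp_eq[OF bs, of "\<sigma> j" "\<sigma> n"] i1 fixn[OF sC] by simp
    qed
    show "(\<Sum>k\<in>{1..<n}. if tabloid_of lam (Transposition.transpose k n \<circ> (\<sigma> \<circ> t)) = T then of_int (sign \<sigma>) else 0) =
          (\<Sum>j\<in>{1..<n}. if tabloid_of lam (\<sigma> \<circ> (Transposition.transpose j n \<circ> t)) = T then (of_int (sign \<sigma>) :: complex) else 0)"
      by (subst sum.reindex_bij_betw[OF bb, symmetric]) (simp add: comp_assoc[symmetric] ce)
  qed
  also have "\<dots> = (\<Sum>j\<in>{1..<n}. \<Sum>\<sigma>\<in>C.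
      if tabloid_of lam (\<sigma> \<circ> (Transposition.transpose j n \<circ> t)) = T then of_int (sign \<sigma>) else 0)"
    by (rule sum.swap)
  also have "\<dots> = (\<Sum>d\<in>cells lam - {e}. \<Sum>\<sigma>\<in>C.
      if tabloid_of lam (\<sigma> \<circ> (Transposition.transpose (t d) n \<circ> t)) = T then of_int (sign \<sigma>) else 0)"
  proof -
    have "bij_betw t (cells lam - {e}) ({1..n} - {n})"
      using bij_betw_DiffI[OF bijt, of "{e}" "{n}"] te ecell assms(1) by auto
    moreover have "{1..n} - {n} = {1..<n}" by auto
    ultimately show ?thesis by (simp add: sum.reindex_bij_betw[symmetric])
  qed
  also have "\<dots> = (\<Sum>d\<in>cells lam - {e}. if fst d = 0 then P T else 0)"
  proof (rule sum.cong[OF refl])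
    fix d assume d: "d \<in> cells lam - {e}"
    obtain r c where rc: "d = (r, c)" by (cases d)
    have tdn: "t d \<noteq> n" using d te ecell injt inj_onD[OF injt, of d e] by auto
    show "(\<Sum>\<sigma>\<in>C. if tabloid_of lam (\<sigma> \<circ> (Transposition.transpose (t d) n \<circ> t)) = T then of_int (sign \<sigma>) else 0)
       = (if fst d = 0 then P T else 0)"
    proof (cases "fst d = 0")
      case True
      have eq: "Transposition.transpose (t d) n \<circ> t = t \<circ> Transposition.transpose d e"
      proof
        fix x
        show "(Transposition.transpose (t d) n \<circ> t) x = (t \<circ> Transposition.transpose d e) x"
        proof (cases "x \<in> cells lam")
          case True
          then show ?thesis using injt d ecell te tdn
            by (auto simp: tr inj_on_eq_iff)
        next
          case False
          then have "t x = 0" by (rule off)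
          moreover have "t d \<noteq> 0" "n \<noteq> 0" using tin[of d] d assms(1) by auto
          ultimately show ?thesis using False d ecell by (auto simp: tr)
        qed
      qed
      have "tabloid_of lam (\<sigma> \<circ> (Transposition.transpose (t d) n \<circ> t)) = tabloid_of lam (\<sigma> \<circ> t)" for \<sigma>
        using eq tab_swap_row[of d lam e "\<sigma> \<circ> t"] d ecell True
        by (simp add: comp_assoc e_def)
      then show ?thesis using True unfolding P_def polytabloid_def C_def by simp
    next
      case False
      define a where "a = t (0, c)"
      define j where "j = t d"
      have r1: "r \<ge> 1" "r < length lam" "c < lam ! r" using False d rc by (auto simp: cells_def)
      have c0: "(0, c) \<in> cells lam" using le0[OF r1(2)] r1 assms(3) by (auto simp: cells_def L0_def)
      have cL: "c < L0 - 1" using le1[OF r1(1,2)] r1(3) assms(4) L0_def by simp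
      have c0e: "(0, c) \<noteq> e" using cL e_def by auto
      have an: "a \<noteq> n" using c0 c0e te ecell a_def inj_onD[OF injt, of "(0,c)" e] by auto
      have aj: "a \<noteq> j" using c0 d rc False a_def j_def inj_onD[OF injt, of "(0,c)" d] by auto
      have ja: "a \<in> {1..n}" "j \<in> {1..n}" using tin[of d] tin[of "(0,c)"] c0 d a_def j_def by auto
      define \<tau> where "\<tau> = Transposition.transpose a j"
      have tauC: "\<tau> \<in> C"
      proof -
        have "\<tau> (t c') \<in> t ` {c'' \<in> cells lam. snd c'' = snd c'}" if "c' \<in> cells lam" for c'
        proof -
          consider "c' = (0, c)" | "c' = d" | "c' \<noteq> (0,c)" "c' \<noteq> d" by blast
          then show ?thesis
          proof cases
            case 1 then show ?thesis using d rc aj a_def j_def \<tau>_def by (auto simp: image_iff)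
          next
            case 2 then show ?thesis using c0 rc aj a_def j_def \<tau>_def by (auto simp: image_iff)
          next
            case 3
            then have "t c' \<noteq> a" "t c' \<noteq> j" using that c0 d a_def j_def inj_onD[OF injt, of c' "(0,c)"] inj_onD[OF injt, of c' d]
              by auto
            then show ?thesis using that \<tau>_def by auto
          qed
        qed
        then show ?thesis unfolding C_def col_stab_def \<tau>_def using ja
          by (auto intro: permutes_swap_id)
      qed
      have eq: "\<tau> \<circ> (Transposition.transpose j n \<circ> t) = (Transposition.transpose j n \<circ> t) \<circ> Transposition.transpose (0, c) e"
      proof
        fix x
        show "(\<tau> \<circ> (Transposition.transpose j n \<circ> t)) x = (Transposition.transpose j n \<circ> t \<circ> Transposition.transpose (0, c) e) x"
        proof (cases "x \<in> cells lam")
          case True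
          then show ?thesis using injt d ecell te tdn c0 c0e an aj a_def j_def \<tau>_def
            by (auto simp: tr inj_on_eq_iff)
        next
          case False
          then have "t x = 0" by (rule off)
          moreover have "a \<noteq> 0" "j \<noteq> 0" "n \<noteq> 0" using ja assms(1) by auto
          ultimately show ?thesis using False c0 ecell \<tau>_def by (auto simp: tr)
        qed
      qed
      have cl: "\<And>\<sigma>. \<sigma> \<in> C \<Longrightarrow> \<sigma> \<circ> \<tau> \<in> C" using col_stab_comp tauC unfolding C_def by blast
      have tb: "tabloid_of lam (\<tau> \<circ> (Transposition.transpose j n \<circ> t)) = tabloid_of lam (Transposition.transpose j n \<circ> t)"
        using eq tab_swap_row[of "(0,c)" lam e "Transposition.transpose j n \<circ> t"] c0 ecell
        by (simp add: e_def)
      have "(\<Sum>\<sigma>\<in>C. if tabloid_of lam (\<sigma> \<circ> (Transposition.transpose j n \<circ> t)) = T then (of_int (sign \<sigma>) :: complex) else 0) = 0"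
        by (rule sum_zero_invol[OF finC Cpn tauC cl _ _ tb]) (simp_all add: \<tau>_def sign_swap_id aj)
      then show ?thesis using False j_def by simp
    qed
  qed
  also have "\<dots> = of_nat (card {d \<in> cells lam - {e}. fst d = 0}) * P T"
  proof -
    have "(cells lam - {e}) \<inter> {d. fst d = 0} = {d \<in> cells lam - {e}. fst d = 0}" by blast
    then show ?thesis using fincells by (simp add: sum.If_cases)
  qed
  also have "{d \<in> cells lam - {e}. fst d = 0} = (\<lambda>i. (0, i)) ` {..<L0 - 1}"
    using assms(3) by (auto simp: cells_def e_def L0_def)
  also have "card \<dots> = L0 - 1" by (simp add: card_image inj_on_def)
  finally have "JM_act n P T = of_nat (L0 - 1) * P T" .
  moreover have "n = L0 + sum_list (tl lam)"
    using part(3) assms(3) L0_def by (cases lam) auto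
  ultimately show "JM_act n (polytabloid lam n t) T
         = (of_nat n - of_nat (sum_list (tl lam)) - 1) * polytabloid lam n t T"
    using L0pos by (simp add: P_def of_nat_diff)
qed

end
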